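(* Let $\mathbb{K}^r_{c,m}$ be an $r$-uniform star-hypergraph with $m\ge 2$ edges and centre of size $c$, where $1\le c<r$. Then $\lambda(\mathbb{K}^r_{c,m})=m(r-c)+2c-1$.
   Context: An $r$-uniform hypergraph (every edge has exactly $r$ vertices) is a star-hypergraph if there is a set $\mathcal{C}\subset V$, its centre, such that $e_i\cap e_j=\mathcal{C}$ for all distinct edges $e_i,e_j$; with $m$ edges and $|\mathcal{C}|=c$ it is denoted $\mathbb{K}^r_{c,m}$ (its vertex set is the union of its edges). An $L(2,1)$-colouring of a hypergraph $\mathbb{H}=(V,E)$ is a map $f:V\to\mathbb{Z}_{\ge 0}$ such that $|f(u)-f(v)|\ge 2$ whenever $u\ne v$ lie in a common edge, and $|f(u)-f(v)|\ge 1$ whenever there are edges $e_1\ni v$, $e_2\ni u$ with $(e_1\cap e_2)\setminus\{u,v\}\ne\emptyset$. Its span is $\max f-\min f$, and $\lambda(\mathbb{H})$ is the minimum span. *)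

theory Defs
  imports Main
begin

definition uniform_hypergraph :: "nat \<Rightarrow> 'a set \<Rightarrow> 'a set set \<Rightarrow> bool" where
  "uniform_hypergraph r V E \<longleftrightarrow> (\<forall>e\<in>E. e \<subseteq> V \<and> finite e \<and> card e = r)"

definition star_hypergraph :: "nat \<Rightarrow> nat \<Rightarrow> nat \<Rightarrow> 'a set \<Rightarrow> 'a set set \<Rightarrow> bool" where
  "star_hypergraph r c m V E \<longleftrightarrow>
     uniform_hypergraph r V E \<and> V = \<Union>E \<and> finite E \<and> card E = m \<and>
     (\<exists>C. card C = c \<and> finite C \<and> (\<forall>e1\<in>E. \<forall>e2\<in>E. e1 \<noteq> e2 \<longrightarrow> e1 \<inter> e2 = C))"

definition L21_colouring :: "'a set \<Rightarrow> 'a set set \<Rightarrow> ('a \<Rightarrow> nat) \<Rightarrow> bool" where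
  "L21_colouring V E f \<longleftrightarrow>
     (\<forall>u\<in>V. \<forall>v\<in>V. u \<noteq> v \<longrightarrow>
        ((\<exists>e\<in>E. u \<in> e \<and> v \<in> e) \<longrightarrow> \<bar>int (f u) - int (f v)\<bar> \<ge> 2) \<and>
        ((\<exists>e1\<in>E. \<exists>e2\<in>E. v \<in> e1 \<and> u \<in> e2 \<and> (e1 \<inter> e2) - {u, v} \<noteq> {})
            \<longrightarrow> \<bar>int (f u) - int (f v)\<bar> \<ge> 1))"

definition span :: "'a set \<Rightarrow> ('a \<Rightarrow> nat) \<Rightarrow> nat" where
  "span V f = Max (f ` V) - Min (f ` V)"

definition lambda_L21 :: "'a set \<Rightarrow> 'a set set \<Rightarrow> nat" where
  "lambda_L21 V E = (LEAST s. \<exists>f. L21_colouring V E f \<and> span V f = s)"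

end

theory Submission
  imports Defs
begin

lemma gap2: "(a::nat) + 2 \<le> b \<or> b + 2 \<le> a \<Longrightarrow> 2 \<le> \<bar>int b - int a\<bar>"
  by auto

lemma L21D:
  assumes "L21_colouring V E f" "u \<in> V" "v \<in> V" "u \<noteq> v"
  shows "((\<exists>e\<in>E. u \<in> e \<and> v \<in> e) \<longrightarrow> \<bar>int (f u) - int (f v)\<bar> \<ge> 2) \<and>
        ((\<exists>e1\<in>E. \<exists>e2\<in>E. v \<in> e1 \<and> u \<in> e2 \<and> (e1 \<inter> e2) - {u, v} \<noteq> {})
            \<longrightarrow> \<bar>int (f u) - int (f v)\<bar> \<ge> 1)"
proof -
  have "\<forall>u\<in>V. \<forall>v\<in>V. u \<noteq> v \<longrightarrow>
        ((\<exists>e\<in>E. u \<in> e \<and> v \<in> e) \<longrightarrow> \<bar>int (f u) - int (f v)\<bar> \<ge> 2) \<and>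
        ((\<exists>e1\<in>E. \<exists>e2\<in>E. v \<in> e1 \<and> u \<in> e2 \<and> (e1 \<inter> e2) - {u, v} \<noteq> {})
            \<longrightarrow> \<bar>int (f u) - int (f v)\<bar> \<ge> 1)" using assms(1) unfolding L21_colouring_def .
  from this[rule_format, OF assms(2,3,4)] show ?thesis .
qed

lemma L21D1: assumes "L21_colouring V E f" "u \<in> V" "v \<in> V" "u \<noteq> v" "e \<in> E" "u \<in> e" "v \<in> e"
  shows "\<bar>int (f u) - int (f v)\<bar> \<ge> 2"
proof -
  have "\<exists>e\<in>E. u \<in> e \<and> v \<in> e" using assms(5-7) by blast
  then show ?thesis using L21D[OF assms(1-4)] by simp
qed

lemma L21D2: assumes "L21_colouring V E f" "u \<in> V" "v \<in> V" "u \<noteq> v" "e1 \<in> E" "e2 \<in> E" "v \<in> e1" "u \<in> e2"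
  "(e1 \<inter> e2) - {u, v} \<noteq> {}" shows "\<bar>int (f u) - int (f v)\<bar> \<ge> 1"
proof -
  have "\<exists>e1\<in>E. \<exists>e2\<in>E. v \<in> e1 \<and> u \<in> e2 \<and> (e1 \<inter> e2) - {u, v} \<noteq> {}" using assms(5-9) by blast
  then show ?thesis using L21D[OF assms(1-4)] by blast
qed

locale star =
  fixes V :: "'a set" and E :: "'a set set" and C :: "'a set" and r c m :: nat
  assumes fin_E: "finite E" and cardE: "card E = m" and m2: "m \<ge> 2"
    and finC: "finite C" and cardC: "card C = c" and c1: "1 \<le> c" and cr: "c < r"
    and edges: "\<And>e. e \<in> E \<Longrightarrow> finite e \<and> card e = r"
    and inter: "\<And>e1 e2. e1 \<in> E \<Longrightarrow> e2 \<in> E \<Longrightarrow> e1 \<noteq> e2 \<Longrightarrow> e1 \<inter> e2 = C"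
    and V_def: "V = \<Union>E"
begin

lemma other_edge: assumes "e \<in> E" obtains e' where "e' \<in> E" "e' \<noteq> e"
proof -
  have "card (E - {e}) = m - 1" using cardE assms fin_E by (simp add: card_Diff_singleton)
  then have "card (E - {e}) \<noteq> 0" using m2 by simp
  then have "E - {e} \<noteq> {}" by force
  then show ?thesis using that by blast
qed

lemma C_sub: assumes "e \<in> E" shows "C \<subseteq> e"
proof -
  obtain e' where "e' \<in> E" "e' \<noteq> e" using other_edge assms by blast
  then show ?thesis using inter[of e e'] assms by auto
qed

lemma E_ne: "E \<noteq> {}" using cardE m2 by auto

lemma C_V: "C \<subseteq> V" using C_sub E_ne V_def by blast

lemma finV: "finite V" using V_def fin_E edges by auto

lemma C_ne: "C \<noteq> {}" using cardC c1 by auto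

lemma noncentre: obtains w where "w \<in> V" "w \<notin> C"
proof -
  obtain e where e: "e \<in> E" using E_ne by blast
  have "card C < card e" using edges[OF e] cardC cr by simp
  then have "\<not> e \<subseteq> C" using card_mono[OF finC] by (meson not_le)
  then obtain w where "w \<in> e" "w \<notin> C" by blast
  then show ?thesis using that e V_def by blast
qed

lemma unique_edge: "v \<in> e \<Longrightarrow> v \<in> e' \<Longrightarrow> e \<in> E \<Longrightarrow> e' \<in> E \<Longrightarrow> v \<notin> C \<Longrightarrow> e = e'"
  using inter[of e e'] by blast

lemma cardV: "card V = c + m * (r - c)"
proof -
  have V: "V = C \<union> (\<Union>e\<in>E. e - C)" using V_def C_sub E_ne by blast
  have "card (\<Union>e\<in>E. e - C) = (\<Sum>e\<in>E. card (e - C))"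
    by (rule card_UN_disjoint) (use fin_E edges inter in auto)
  also have "\<dots> = (\<Sum>e\<in>E. r - c)"
    by (rule sum.cong) (auto simp: card_Diff_subset[OF finC C_sub] edges cardC)
  also have "\<dots> = m * (r - c)" using cardE by simp
  finally have 1: "card (\<Union>e\<in>E. e - C) = m * (r - c)" .
  have "card V = card C + card (\<Union>e\<in>E. e - C)"
    unfolding V by (rule card_Un_disjoint) (use finC fin_E edges in auto)
  then show ?thesis using 1 cardC by simp
qed

lemma col_distinct:
  assumes f: "L21_colouring V E f" and "u \<in> V" "v \<in> V" "u \<noteq> v"
  shows "f u \<noteq> f v"
proof (cases "\<exists>e\<in>E. u \<in> e \<and> v \<in> e")
  case True
  then obtain e where "e \<in> E" "u \<in> e" "v \<in> e" by blast
  then have "\<bar>int (f u) - int (f v)\<bar> \<ge> 2" using L21D1[OF f assms(2-4)] by blast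
  then show ?thesis by auto
next
  case False
  obtain e1 e2 where e: "e1 \<in> E" "e2 \<in> E" "v \<in> e1" "u \<in> e2" using assms V_def by blast
  have ne: "e1 \<noteq> e2" using False e by blast
  have "u \<notin> C" "v \<notin> C" using False e C_sub by blast+
  then have "(e1 \<inter> e2) - {u, v} \<noteq> {}" using inter[OF e(1,2) ne] C_ne by auto
  then have "\<bar>int (f u) - int (f v)\<bar> \<ge> 1" using L21D2[OF f assms(2-4) e] by blast
  then show ?thesis by auto
qed

lemma col_centre:
  assumes f: "L21_colouring V E f" and "x \<in> C" "v \<in> V" "v \<noteq> x"
  shows "\<bar>int (f x) - int (f v)\<bar> \<ge> 2"
proof -
  obtain e where "e \<in> E" "v \<in> e" using assms V_def by blast
  moreover have "x \<in> e" using C_sub calculation assms by blast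
  moreover have xV: "x \<in> V" using C_V assms by blast
  ultimately show ?thesis by (intro L21D1[OF f xV assms(3)]) (use assms in auto)
qed

lemma lower:
  assumes f: "L21_colouring V E f"
  shows "span V f \<ge> m * (r - c) + 2 * c - 1"
proof -
  obtain w where w: "w \<in> V" "w \<notin> C" using noncentre by blast
  define S where "S = f ` V"
  define a where "a = Min S"
  define b where "b = Max S"
  have finS: "finite S" "S \<noteq> {}" using finV w S_def by auto
  have ab: "\<And>v. v \<in> V \<Longrightarrow> a \<le> f v \<and> f v \<le> b"
    using finS unfolding a_def b_def S_def by auto
  define g where "g x = (if f x > f w then f x - 1 else f x + 1)" for x
  have fxw: "\<And>x. x \<in> C \<Longrightarrow> f x \<noteq> f w" using col_distinct[OF f] w C_V by blast
  have gS: "g x \<notin> S" if x: "x \<in> C" for x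
  proof
    assume "g x \<in> S"
    then obtain v where v: "v \<in> V" "g x = f v" using S_def by auto
    show False
    proof (cases "v = x")
      case True then show False using v unfolding g_def by (auto split: if_splits)
    next
      case False
      then have "\<bar>int (f x) - int (f v)\<bar> \<ge> 2" using col_centre[OF f x v(1)] by blast
      then show False using v unfolding g_def by (auto split: if_splits)
    qed
  qed
  have gab: "g x \<in> {a..b}" if x: "x \<in> C" for x
    using ab[OF w(1)] ab[of x] x C_V fxw[OF x] unfolding g_def by auto
  have ginj: "inj_on g C"
  proof (rule inj_onI)
    fix x y assume x: "x \<in> C" and y: "y \<in> C" and eq: "g x = g y"
    have fwS: "f w \<in> S" using w S_def by auto
    have "f x = f y"
    proof (cases "f x > f w")
      case True
      show ?thesis
      proof (cases "f y > f w")
        case True then show ?thesis using eq \<open>f x > f w\<close> unfolding g_def by auto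
      next
        case False
        then have "f y < f w" using fxw[OF y] by auto
        then have "g x = f w" using eq \<open>f x > f w\<close> False unfolding g_def by auto
        then show ?thesis using gS[OF x] fwS by simp
      qed
    next
      case False
      then have xl: "f x < f w" using fxw[OF x] by auto
      show ?thesis
      proof (cases "f y > f w")
        case True
        then have "g y = f w" using eq xl True unfolding g_def by auto
        then show ?thesis using gS[OF y] fwS by simp
      next
        case False then show ?thesis using eq xl unfolding g_def by auto
      qed
    qed
    then show "x = y" using col_distinct[OF f] x y C_V by blast
  qed
  have injf: "inj_on f V" using col_distinct[OF f] by (meson inj_onI)
  have "card (S \<union> g ` C) = card S + card (g ` C)"
    by (rule card_Un_disjoint) (use finS finC gS in auto)
  also have "\<dots> = card V + c" using card_image[OF injf] card_image[OF ginj] cardC S_def by simp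
  finally have 1: "card (S \<union> g ` C) = c + m * (r - c) + c" using cardV by simp
  have "S \<union> g ` C \<subseteq> {a..b}" using gab ab S_def by auto
  then have "card (S \<union> g ` C) \<le> card {a..b}" by (rule card_mono[rotated]) simp
  then have "c + m * (r - c) + c \<le> Suc b - a" using 1 by simp
  moreover have "span V f = b - a" unfolding span_def a_def b_def S_def by simp
  ultimately show ?thesis by linarith
qed

lemma upper:
  "\<exists>f. L21_colouring V E f \<and> span V f \<le> m * (r - c) + 2 * c - 1"
proof -
  obtain idE where idE: "bij_betw idE E {0..<m}"
    using finite_same_card_bij[OF fin_E, of "{0..<m}"] cardE by auto
  obtain idC where idC: "bij_betw idC C {0..<c}"
    using finite_same_card_bij[OF finC, of "{0..<c}"] cardC by auto
  have "\<forall>e\<in>E. \<exists>h. bij_betw h (e - C) {0..<r-c}"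
  proof
    fix e assume e: "e \<in> E"
    have "card (e - C) = r - c" using card_Diff_subset[OF finC C_sub[OF e]] edges[OF e] cardC by simp
    then show "\<exists>h. bij_betw h (e - C) {0..<r-c}"
      using finite_same_card_bij[of "e - C" "{0..<r-c}"] edges[OF e] by auto
  qed
  then obtain P where P: "\<And>e. e \<in> E \<Longrightarrow> bij_betw (P e) (e - C) {0..<r-c}"
    using bchoice[of E "\<lambda>e h. bij_betw h (e - C) {0..<r-c}"] by blast
  define eo where "eo v = (SOME e. e \<in> E \<and> v \<in> e)" for v
  have eo: "eo v \<in> E \<and> v \<in> eo v" if "v \<in> V" for v
  proof -
    have "\<exists>e. e \<in> E \<and> v \<in> e" using that V_def by blast
    then show ?thesis unfolding eo_def by (rule someI_ex)
  qed
  have eo_eq: "eo v = e" if "v \<in> e" "e \<in> E" "v \<notin> C" for v e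
    using unique_edge[of v "eo v" e] eo[of v] that V_def by blast
  define f where "f v = (if v \<in> C then m * (r - c) + 2 * idC v + 1 else P (eo v) v * m + idE (eo v))" for v
  have idCl: "idC v < c" if "v \<in> C" for v using idC that by (auto simp: bij_betw_def)
  have idEl: "idE e < m" if "e \<in> E" for e using idE that by (auto simp: bij_betw_def)
  have Pl: "P (eo v) v < r - c" if "v \<in> V" "v \<notin> C" for v
    using P[of "eo v"] eo[OF that(1)] that by (auto simp: bij_betw_def)
  have fC: "f v = m * (r - c) + 2 * idC v + 1" if "v \<in> C" for v using that f_def by simp
  have fP: "f v = P (eo v) v * m + idE (eo v)" if "v \<notin> C" for v using that f_def by simp
  have fPl: "f v < m * (r - c)" if v: "v \<in> V" "v \<notin> C" for v
  proof -
    have "f v < P (eo v) v * m + m" using fP[OF v(2)] idEl eo[OF v(1)] by simp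
    also have "\<dots> = Suc (P (eo v) v) * m" by simp
    also have "\<dots> \<le> (r - c) * m" using Pl[OF v] by (intro mult_le_mono1) simp
    finally show ?thesis by (simp add: mult.commute)
  qed
  have claim: "\<bar>int (f u) - int (f v)\<bar> \<ge> 2 \<or> (u \<notin> C \<and> v \<notin> C \<and> eo u \<noteq> eo v \<and> f u \<noteq> f v)"
    if uv: "u \<in> V" "v \<in> V" "u \<noteq> v" for u v
  proof (cases "u \<in> C")
    case uC: True
    show ?thesis
    proof (cases "v \<in> C")
      case True
      have "idC u \<noteq> idC v" using idC uC True uv(3) by (auto simp: bij_betw_def inj_on_def)
      then have "f v + 2 \<le> f u \<or> f u + 2 \<le> f v" using fC[OF uC] fC[OF True] by auto
      then show ?thesis using gap2[of "f v" "f u"] by blast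
    next
      case False
      have "f v + 2 \<le> f u" using fC[OF uC] fPl[OF uv(2) False] by simp
      then show ?thesis using gap2[of "f v" "f u"] by blast
    qed
  next
    case uC: False
    show ?thesis
    proof (cases "v \<in> C")
      case True
      have "f u + 2 \<le> f v" using fC[OF True] fPl[OF uv(1) uC] by simp
      then show ?thesis using gap2[of "f v" "f u"] by blast
    next
      case vC: False
      show ?thesis
      proof (cases "eo u = eo v")
        case True
        define e where "e = eo u"
        have e: "e \<in> E" "u \<in> e" "v \<in> e" using eo uv True e_def by auto
        have "P e u \<noteq> P e v" using P[OF e(1)] e uC vC uv(3) by (auto simp: bij_betw_def inj_on_def)
        then have ne: "\<bar>int (P e u) - int (P e v)\<bar> \<ge> 1" by auto
        have "int (f u) - int (f v) = (int (P e u) - int (P e v)) * int m"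
          using fP[OF uC] fP[OF vC] True e_def by (simp add: algebra_simps)
        then have "\<bar>int (f u) - int (f v)\<bar> = \<bar>int (P e u) - int (P e v)\<bar> * int m" by (simp add: abs_mult)
        also have "\<dots> \<ge> 1 * 2" using ne m2 by (intro mult_mono) auto
        finally show ?thesis by simp
      next
        case False
        have "idE (eo u) \<noteq> idE (eo v)" using idE False eo uv by (auto simp: bij_betw_def inj_on_def)
        moreover have "f u mod m = idE (eo u)" "f v mod m = idE (eo v)"
          using fP[OF uC] fP[OF vC] idEl eo uv by auto
        ultimately have "f u \<noteq> f v" by metis
        then show ?thesis using uC vC False by blast
      qed
    qed
  qed
  have col: "L21_colouring V E f"
    unfolding L21_colouring_def
  proof (intro ballI impI conjI)
    fix u v assume uv: "u \<in> V" "v \<in> V" "u \<noteq> v"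
    {
      assume "\<exists>e\<in>E. u \<in> e \<and> v \<in> e"
      then obtain e where e: "e \<in> E" "u \<in> e" "v \<in> e" by blast
      show "\<bar>int (f u) - int (f v)\<bar> \<ge> 2"
        using claim[OF uv] eo_eq[OF e(2,1)] eo_eq[OF e(3,1)] by auto
    }
    show "\<bar>int (f u) - int (f v)\<bar> \<ge> 1" using claim[OF uv] by auto
  qed
  have bound: "f v \<le> m * (r - c) + 2 * c - 1" if "v \<in> V" for v
  proof (cases "v \<in> C")
    case True then show ?thesis using fC idCl[OF True] by simp
  next
    case False then show ?thesis using fPl[OF that False] by simp
  qed
  have "Max (f ` V) \<le> m * (r - c) + 2 * c - 1"
  proof -
    have "f ` V \<noteq> {}" using C_V C_ne by blast
    then show ?thesis using Max_le_iff[OF finite_imageI[OF finV]] bound by auto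
  qed
  then have "span V f \<le> m * (r - c) + 2 * c - 1" unfolding span_def by linarith
  with col show ?thesis by blast
qed

end

theorem lemma3p9:
  fixes V :: "'a set" and E :: "'a set set" and r c m :: nat
  assumes "star_hypergraph r c m V E"
    and "m \<ge> 2" and "1 \<le> c" and "c < r"
  shows "lambda_L21 V E = m * (r - c) + 2 * c - 1"
proof -
  from assms(1) obtain C where C: "card C = c" "finite C"
    "\<forall>e1\<in>E. \<forall>e2\<in>E. e1 \<noteq> e2 \<longrightarrow> e1 \<inter> e2 = C"
    and u: "uniform_hypergraph r V E" and VE: "V = \<Union>E" "finite E" "card E = m"
    unfolding star_hypergraph_def by blast
  interpret star V E C r c m
    by unfold_locales (use C u VE assms(2-4) in \<open>auto simp: uniform_hypergraph_def\<close>)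
  obtain f where f: "L21_colouring V E f" "span V f \<le> m * (r - c) + 2 * c - 1" using upper by blast
  have "span V f = m * (r - c) + 2 * c - 1" using f lower[OF f(1)] by linarith
  then have ex: "\<exists>f. L21_colouring V E f \<and> span V f = m * (r - c) + 2 * c - 1" using f by blast
  show ?thesis unfolding lambda_L21_def
    by (rule Least_equality) (use ex lower in auto)
qed

end
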